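(* Let $(a_i)_{i\in\mathbb Z},(b_i)_{i\in\mathbb Z}$ be finitely supported sequences of integers and put $q_i=a_i-b_i$. The following three sets of conditions are equivalent. (1) With $q_\sigma$ the lowest nonzero $q_i$: (a) $a_l=0$ for $l<\sigma$; (b) $a_\sigma=q_\sigma>0$; (c) $\max(q_l,0)\le a_l<\sum_{i\le l}q_i$ for $l>\sigma$. (2) With $a_\sigma$ the lowest nonzero $a_i$: (a) all $a_i,b_i$ are nonnegative; (b) $b_i=0$ for $i\le\sigma$; (c) $\sum_{i\le l}b_i<\sum_{i<l}a_i$ for all $l>\sigma$. (3) With $m=\sum_ia_i$, $n=\sum_ib_i$: (a) all $a_i,b_i$ are nonnegative; (b) $n<m$; (c) for all $(\alpha,\beta)\in R_{m,n}$ with $\beta\ge\alpha-1$ one has $(\alpha,\beta)\in L_{a,b}$.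
   Context: For positive integers $m,n$, $R_{m,n}=\{(\alpha,\beta)\in\mathbb Z^2\mid1\le\alpha\le m,\ 1\le\beta\le n\}$. For a finitely supported sequence $(c_i)$ of nonnegative integers, $S(c)$ is the nondecreasing finite sequence of integers in which each integer $i$ appears exactly $c_i$ times, indexed starting from $1$ (so $S(c)$ has length $\sum_ic_i$). For nonnegative finitely supported $(a_i),(b_i)$ with $m=\sum_ia_i$, $n=\sum_ib_i$, put $L_{a,b}=\{(\alpha,\beta)\in R_{m,n}\mid S(a)_\alpha<S(b)_\beta\}$. *)

theory Defs
  imports Main
begin

definition fsum :: "(int \<Rightarrow> int) \<Rightarrow> (int \<Rightarrow> bool) \<Rightarrow> int" where
  "fsum f P = sum f {i. P i \<and> f i \<noteq> 0}"

text \<open>S(c): the nondecreasing list in which each integer i occurs c_i times.\<close>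
definition Sseq :: "(int \<Rightarrow> int) \<Rightarrow> int list" where
  "Sseq c = concat (map (\<lambda>i. replicate (nat (c i)) i) (sorted_list_of_set {i. c i \<noteq> 0}))"

text \<open>1-based indexing into S(c).\<close>
definition Sat :: "(int \<Rightarrow> int) \<Rightarrow> int \<Rightarrow> int" where
  "Sat c \<alpha> = Sseq c ! nat (\<alpha> - 1)"

definition Rrect :: "int \<Rightarrow> int \<Rightarrow> (int \<times> int) set" where
  "Rrect m n = {(\<alpha>, \<beta>). 1 \<le> \<alpha> \<and> \<alpha> \<le> m \<and> 1 \<le> \<beta> \<and> \<beta> \<le> n}"

definition Lset :: "(int \<Rightarrow> int) \<Rightarrow> (int \<Rightarrow> int) \<Rightarrow> (int \<times> int) set" where
  "Lset a b = {(\<alpha>, \<beta>) \<in> Rrect (fsum a (\<lambda>_. True)) (fsum b (\<lambda>_. True)).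
                Sat a \<alpha> < Sat b \<beta>}"

end

theory Submission imports Defs begin

lemma fsum_eq:
  assumes "finite F" "{i. f i \<noteq> 0} \<subseteq> F"
  shows "fsum f P = sum f {i\<in>F. P i}"
  unfolding fsum_def
  by (rule sum.mono_neutral_left) (use assms in auto)

lemma fsum_diff:
  assumes "finite {i. f i \<noteq> 0}" "finite {i. g i \<noteq> 0}"
  shows "fsum (\<lambda>i. f i - g i) P = fsum f P - fsum g P"
proof -
  let ?F = "{i. f i \<noteq> 0} \<union> {i. g i \<noteq> 0}"
  have "fsum (\<lambda>i. f i - g i) P = sum (\<lambda>i. f i - g i) {i\<in>?F. P i}"
    by (rule fsum_eq) (use assms in auto)
  also have "\<dots> = sum f {i\<in>?F. P i} - sum g {i\<in>?F. P i}" by (simp add: sum_subtractf)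
  also have "sum f {i\<in>?F. P i} = fsum f P" by (rule fsum_eq[symmetric]) (use assms in auto)
  also have "sum g {i\<in>?F. P i} = fsum g P" by (rule fsum_eq[symmetric]) (use assms in auto)
  finally show ?thesis .
qed

lemma fsum_split:
  assumes "finite {i. f i \<noteq> 0}"
  shows "fsum f (\<lambda>i. i \<le> l) = fsum f (\<lambda>i. i < (l::int)) + f l"
proof -
  let ?F = "insert l {i. f i \<noteq> 0}"
  have 1: "fsum f (\<lambda>i. i \<le> l) = sum f {i\<in>?F. i \<le> l}" by (rule fsum_eq) (use assms in auto)
  have 2: "fsum f (\<lambda>i. i < l) = sum f {i\<in>?F. i < l}" by (rule fsum_eq) (use assms in auto)
  have "{i\<in>?F. i \<le> l} = insert l {i\<in>?F. i < l}" by auto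
  then show ?thesis using 1 2 assms by (simp add: sum.insert)
qed

lemma fsum_lt: "fsum f (\<lambda>i. i < l) = fsum f (\<lambda>i. i \<le> (l::int) - 1)"
  unfolding fsum_def by (rule sum.cong) auto

lemma fsum_mono:
  assumes "finite {i. f i \<noteq> 0}" "\<And>i. 0 \<le> f i" "\<And>i. P i \<Longrightarrow> Q i"
  shows "fsum f P \<le> fsum f Q"
  unfolding fsum_def
  by (rule sum_mono2) (use assms in \<open>auto intro: finite_subset\<close>)

lemma fsum_zero:
  assumes "\<And>i. P i \<Longrightarrow> f i = 0"
  shows "fsum f P = 0"
  unfolding fsum_def using assms by auto

lemma fsum_all:
  assumes "\<And>i. f i \<noteq> 0 \<Longrightarrow> P i"
  shows "fsum f P = fsum f (\<lambda>_. True)"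
  unfolding fsum_def using assms by (metis)

lemma sorted_lemma:
  "sorted xs \<Longrightarrow> k < length xs \<Longrightarrow> (xs ! k \<le> l) \<longleftrightarrow> k < length (filter (\<lambda>x. x \<le> l) xs)"
proof (induction xs arbitrary: k)
  case Nil then show ?case by simp
next
  case (Cons x ys)
  show ?case
  proof (cases "x \<le> l")
    case True
    then show ?thesis using Cons by (cases k) auto
  next
    case False
    then have "filter (\<lambda>x. x \<le> l) ys = []" using Cons.prems(1)
      by (auto simp: filter_empty_conv dest: order_trans)
    moreover have "\<not> (x # ys) ! k \<le> l"
    proof (cases k)
      case 0 then show ?thesis using False by simp
    next
      case (Suc k') then have "ys ! k' \<in> set ys" using Cons.prems(2) by simp
      then show ?thesis using Cons.prems(1) False Suc by (auto dest: order_trans)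
    qed
    ultimately show ?thesis using False by simp
  qed
qed

lemma sorted_concat_rep:
  "sorted xs \<Longrightarrow> sorted (concat (map (\<lambda>i. replicate (f i) i) xs))"
  by (induction xs) (auto simp: sorted_append)

lemma sorted_Sseq: "sorted (Sseq c)"
  unfolding Sseq_def by (rule sorted_concat_rep) simp

lemma length_Sseq:
  assumes "finite {i. c i \<noteq> 0}" "\<And>i. 0 \<le> c i"
  shows "int (length (filter P (Sseq c))) = fsum c P"
proof -
  let ?S = "{i. c i \<noteq> 0}"
  let ?xs = "sorted_list_of_set ?S"
  have "length (filter P (Sseq c)) = sum_list (map (\<lambda>i. if P i then nat (c i) else 0) ?xs)"
    unfolding Sseq_def filter_concat length_concat
    by (simp add: o_def filter_replicate if_distrib cong: if_cong)
  also have "\<dots> = sum (\<lambda>i. if P i then nat (c i) else 0) ?S"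
    using assms(1) by (simp add: sum_list_distinct_conv_sum_set)
  finally have "int (length (filter P (Sseq c))) = sum (\<lambda>i. int (if P i then nat (c i) else 0)) ?S"
    by simp
  also have "\<dots> = sum (\<lambda>i. if P i then c i else 0) ?S"
    using assms(2) by (intro sum.cong) auto
  also have "\<dots> = sum c {i\<in>?S. P i}" using assms(1) by (simp add: sum.inter_filter[symmetric])
  also have "\<dots> = fsum c P" unfolding fsum_def by (rule sum.cong) auto
  finally show ?thesis .
qed

lemma Sat_le:
  assumes "finite {i. c i \<noteq> 0}" "\<And>i. 0 \<le> c i" "1 \<le> \<alpha>" "\<alpha> \<le> fsum c (\<lambda>_. True)"
  shows "Sat c \<alpha> \<le> l \<longleftrightarrow> \<alpha> \<le> fsum c (\<lambda>i. i \<le> l)"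
proof -
  have len: "int (length (Sseq c)) = fsum c (\<lambda>_. True)"
    using length_Sseq[OF assms(1,2), of "\<lambda>_. True"] by simp
  have k: "nat (\<alpha> - 1) < length (Sseq c)" using len assms(3,4) by linarith
  have "Sat c \<alpha> \<le> l \<longleftrightarrow> nat (\<alpha> - 1) < length (filter (\<lambda>x. x \<le> l) (Sseq c))"
    unfolding Sat_def by (rule sorted_lemma[OF sorted_Sseq k])
  also have "\<dots> \<longleftrightarrow> \<alpha> \<le> fsum c (\<lambda>i. i \<le> l)"
    using length_Sseq[OF assms(1,2), of "\<lambda>i. i \<le> l"] assms(3) by linarith
  finally show ?thesis .
qed

lemma finite_bound: "finite (S::int set) \<Longrightarrow> \<exists>N. \<forall>i\<in>S. i < N"
  by (induction rule: finite_induct) (auto, metis less_trans gt_ex max.strict_boundedE not_le le_less_trans lt_ex linorder_not_less)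

theorem lemma5p1p1:
  fixes a b :: "int \<Rightarrow> int"
  assumes fa: "finite {i. a i \<noteq> 0}" and fb: "finite {i. b i \<noteq> 0}"
  defines "q \<equiv> (\<lambda>i. a i - b i)"
  defines "m \<equiv> fsum a (\<lambda>_. True)"
  defines "n \<equiv> fsum b (\<lambda>_. True)"
  shows
   "((\<exists>\<sigma>. q \<sigma> \<noteq> 0 \<and> (\<forall>i<\<sigma>. q i = 0) \<and>
         (\<forall>l<\<sigma>. a l = 0) \<and>
         a \<sigma> = q \<sigma> \<and> q \<sigma> > 0 \<and>
         (\<forall>l>\<sigma>. max (q l) 0 \<le> a l \<and> a l < fsum q (\<lambda>i. i \<le> l)))
     \<longleftrightarrow>
     (\<exists>\<sigma>. a \<sigma> \<noteq> 0 \<and> (\<forall>i<\<sigma>. a i = 0) \<and>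
         (\<forall>i. 0 \<le> a i \<and> 0 \<le> b i) \<and>
         (\<forall>i\<le>\<sigma>. b i = 0) \<and>
         (\<forall>l>\<sigma>. fsum b (\<lambda>i. i \<le> l) < fsum a (\<lambda>i. i < l))))
    \<and>
    ((\<exists>\<sigma>. a \<sigma> \<noteq> 0 \<and> (\<forall>i<\<sigma>. a i = 0) \<and>
         (\<forall>i. 0 \<le> a i \<and> 0 \<le> b i) \<and>
         (\<forall>i\<le>\<sigma>. b i = 0) \<and>
         (\<forall>l>\<sigma>. fsum b (\<lambda>i. i \<le> l) < fsum a (\<lambda>i. i < l)))
     \<longleftrightarrow>
     ((\<forall>i. 0 \<le> a i \<and> 0 \<le> b i) \<and> n < m \<and>
      (\<forall>\<alpha> \<beta>. (\<alpha>, \<beta>) \<in> Rrect m n \<and> \<beta> \<ge> \<alpha> - 1 \<longrightarrow> (\<alpha>, \<beta>) \<in> Lset a b)))"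
proof -
  have qsum: "fsum q (\<lambda>i. i \<le> l) = fsum a (\<lambda>i. i < l) + a l - fsum b (\<lambda>i. i \<le> l)" for l
    unfolding q_def using fsum_diff[OF fa fb] fsum_split[OF fa] by simp
  have nonneg_b: "fsum b P \<ge> 0" if "\<forall>i. 0 \<le> b i" for P
    unfolding fsum_def using that by (simp add: sum_nonneg)
  have E12: "(\<exists>\<sigma>. q \<sigma> \<noteq> 0 \<and> (\<forall>i<\<sigma>. q i = 0) \<and>
         (\<forall>l<\<sigma>. a l = 0) \<and>
         a \<sigma> = q \<sigma> \<and> q \<sigma> > 0 \<and>
         (\<forall>l>\<sigma>. max (q l) 0 \<le> a l \<and> a l < fsum q (\<lambda>i. i \<le> l)))
     \<longleftrightarrow>
     (\<exists>\<sigma>. a \<sigma> \<noteq> 0 \<and> (\<forall>i<\<sigma>. a i = 0) \<and>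
         (\<forall>i. 0 \<le> a i \<and> 0 \<le> b i) \<and>
         (\<forall>i\<le>\<sigma>. b i = 0) \<and>
         (\<forall>l>\<sigma>. fsum b (\<lambda>i. i \<le> l) < fsum a (\<lambda>i. i < l)))"
  proof
    assume "\<exists>\<sigma>. q \<sigma> \<noteq> 0 \<and> (\<forall>i<\<sigma>. q i = 0) \<and>
         (\<forall>l<\<sigma>. a l = 0) \<and>
         a \<sigma> = q \<sigma> \<and> q \<sigma> > 0 \<and>
         (\<forall>l>\<sigma>. max (q l) 0 \<le> a l \<and> a l < fsum q (\<lambda>i. i \<le> l))"
    then obtain s where h: "q s \<noteq> 0" "\<forall>i<s. q i = 0" "\<forall>l<s. a l = 0" "a s = q s" "q s > 0"
      "\<forall>l>s. max (q l) 0 \<le> a l \<and> a l < fsum q (\<lambda>i. i \<le> l)" by blast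
    have an: "0 \<le> a i" for i using h by (cases i s rule: linorder_cases) auto
    have bn: "0 \<le> b i" for i using h unfolding q_def by (cases i s rule: linorder_cases) auto
    have bz: "\<forall>i\<le>s. b i = 0" using h unfolding q_def by (auto simp: le_less)
    have "\<forall>l>s. fsum b (\<lambda>i. i \<le> l) < fsum a (\<lambda>i. i < l)"
      using h(6) qsum by fastforce
    then show "\<exists>\<sigma>. a \<sigma> \<noteq> 0 \<and> (\<forall>i<\<sigma>. a i = 0) \<and>
         (\<forall>i. 0 \<le> a i \<and> 0 \<le> b i) \<and>
         (\<forall>i\<le>\<sigma>. b i = 0) \<and>
         (\<forall>l>\<sigma>. fsum b (\<lambda>i. i \<le> l) < fsum a (\<lambda>i. i < l))"
      using h an bn bz by (intro exI[of _ s]) auto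
  next
    assume "\<exists>\<sigma>. a \<sigma> \<noteq> 0 \<and> (\<forall>i<\<sigma>. a i = 0) \<and>
         (\<forall>i. 0 \<le> a i \<and> 0 \<le> b i) \<and>
         (\<forall>i\<le>\<sigma>. b i = 0) \<and>
         (\<forall>l>\<sigma>. fsum b (\<lambda>i. i \<le> l) < fsum a (\<lambda>i. i < l))"
    then obtain s where h: "a s \<noteq> 0" "\<forall>i<s. a i = 0" "\<forall>i. 0 \<le> a i \<and> 0 \<le> b i"
      "\<forall>i\<le>s. b i = 0" "\<forall>l>s. fsum b (\<lambda>i. i \<le> l) < fsum a (\<lambda>i. i < l)" by blast
    have "\<forall>l>s. max (q l) 0 \<le> a l \<and> a l < fsum q (\<lambda>i. i \<le> l)"
      using h qsum unfolding q_def by fastforce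
    then show "\<exists>\<sigma>. q \<sigma> \<noteq> 0 \<and> (\<forall>i<\<sigma>. q i = 0) \<and>
         (\<forall>l<\<sigma>. a l = 0) \<and>
         a \<sigma> = q \<sigma> \<and> q \<sigma> > 0 \<and>
         (\<forall>l>\<sigma>. max (q l) 0 \<le> a l \<and> a l < fsum q (\<lambda>i. i \<le> l))"
      using h unfolding q_def
      by (intro exI[of _ s]) (auto simp: le_less order.order_iff_strict)
  qed
  have E23: "(\<exists>\<sigma>. a \<sigma> \<noteq> 0 \<and> (\<forall>i<\<sigma>. a i = 0) \<and>
         (\<forall>i. 0 \<le> a i \<and> 0 \<le> b i) \<and>
         (\<forall>i\<le>\<sigma>. b i = 0) \<and>
         (\<forall>l>\<sigma>. fsum b (\<lambda>i. i \<le> l) < fsum a (\<lambda>i. i < l)))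
     \<longleftrightarrow>
     ((\<forall>i. 0 \<le> a i \<and> 0 \<le> b i) \<and> n < m \<and>
      (\<forall>\<alpha> \<beta>. (\<alpha>, \<beta>) \<in> Rrect m n \<and> \<beta> \<ge> \<alpha> - 1 \<longrightarrow> (\<alpha>, \<beta>) \<in> Lset a b))"
  proof
    assume "\<exists>\<sigma>. a \<sigma> \<noteq> 0 \<and> (\<forall>i<\<sigma>. a i = 0) \<and>
         (\<forall>i. 0 \<le> a i \<and> 0 \<le> b i) \<and>
         (\<forall>i\<le>\<sigma>. b i = 0) \<and>
         (\<forall>l>\<sigma>. fsum b (\<lambda>i. i \<le> l) < fsum a (\<lambda>i. i < l))"
    then obtain s where h: "a s \<noteq> 0" "\<forall>i<s. a i = 0" "\<forall>i. 0 \<le> a i \<and> 0 \<le> b i"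
      "\<forall>i\<le>s. b i = 0" "\<forall>l>s. fsum b (\<lambda>i. i \<le> l) < fsum a (\<lambda>i. i < l)" by blast
    have an: "\<And>i. 0 \<le> a i" and bn: "\<And>i. 0 \<le> b i" using h(3) by auto
    obtain N where N: "\<forall>i\<in>{i. a i \<noteq> 0} \<union> {i. b i \<noteq> 0} \<union> {s}. i < N"
      using finite_bound[of "{i. a i \<noteq> 0} \<union> {i. b i \<noteq> 0} \<union> {s}"] fa fb by auto
    have "fsum b (\<lambda>i. i \<le> N) = n" unfolding n_def by (rule fsum_all) (use N in \<open>fastforce simp: less_imp_le\<close>)
    moreover have "fsum a (\<lambda>i. i < N) = m" unfolding m_def by (rule fsum_all) (use N in force)
    moreover have "N > s" using N by auto
    ultimately have nm: "n < m" using h(5) by auto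
    have L: "(\<alpha>, \<beta>) \<in> Lset a b" if r: "(\<alpha>, \<beta>) \<in> Rrect m n" and ab: "\<beta> \<ge> \<alpha> - 1" for \<alpha> \<beta>
    proof -
      from r have r': "1 \<le> \<alpha>" "\<alpha> \<le> m" "1 \<le> \<beta>" "\<beta> \<le> n" unfolding Rrect_def by auto
      define l where "l = Sat b \<beta>"
      have bl: "\<beta> \<le> fsum b (\<lambda>i. i \<le> l)"
        using Sat_le[OF fb bn r'(3)] r'(4) unfolding n_def l_def by auto
      have "l > s"
      proof (rule ccontr)
        assume "\<not> s < l"
        then have "fsum b (\<lambda>i. i \<le> l) = 0" using h(4) by (intro fsum_zero) auto
        then show False using bl r' by auto
      qed
      then have "fsum b (\<lambda>i. i \<le> l) < fsum a (\<lambda>i. i \<le> l - 1)" using h(5) fsum_lt by metis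
      then have "\<alpha> \<le> fsum a (\<lambda>i. i \<le> l - 1)" using bl ab by linarith
      moreover have "(Sat a \<alpha> \<le> l - 1) = (\<alpha> \<le> fsum a (\<lambda>i. i \<le> l - 1))"
        by (rule Sat_le[OF fa an r'(1)]) (use r'(2) in \<open>simp add: m_def\<close>)
      ultimately have "Sat a \<alpha> \<le> l - 1" by (rule iffD2[rotated])
      then show ?thesis using r unfolding Lset_def l_def m_def n_def by auto
    qed
    show "(\<forall>i. 0 \<le> a i \<and> 0 \<le> b i) \<and> n < m \<and>
      (\<forall>\<alpha> \<beta>. (\<alpha>, \<beta>) \<in> Rrect m n \<and> \<beta> \<ge> \<alpha> - 1 \<longrightarrow> (\<alpha>, \<beta>) \<in> Lset a b)"
      using h(3) nm L by blast
  next
    assume h: "(\<forall>i. 0 \<le> a i \<and> 0 \<le> b i) \<and> n < m \<and>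
      (\<forall>\<alpha> \<beta>. (\<alpha>, \<beta>) \<in> Rrect m n \<and> \<beta> \<ge> \<alpha> - 1 \<longrightarrow> (\<alpha>, \<beta>) \<in> Lset a b)"
    have hn: "\<forall>i. 0 \<le> a i \<and> 0 \<le> b i" and hnm: "n < m" and hL: "\<forall>\<alpha> \<beta>. (\<alpha>, \<beta>) \<in> Rrect m n \<and> \<beta> \<ge> \<alpha> - 1 \<longrightarrow> (\<alpha>, \<beta>) \<in> Lset a b" using h by blast+
    have an: "\<And>i. 0 \<le> a i" and bn: "\<And>i. 0 \<le> b i" using hn hnm by auto
    have n0: "0 \<le> n" unfolding n_def using nonneg_b hn hnm by auto
    have LS: "Sat a \<alpha> < Sat b \<beta>" if "1 \<le> \<alpha>" "\<alpha> \<le> m" "1 \<le> \<beta>" "\<beta> \<le> n" "\<beta> \<ge> \<alpha> - 1" for \<alpha> \<beta>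
    proof -
      have "(\<alpha>, \<beta>) \<in> Rrect m n" using that unfolding Rrect_def by simp
      then have "(\<alpha>, \<beta>) \<in> Lset a b" using hL that(5) by blast
      then show ?thesis unfolding Lset_def by simp
    qed
    have "{i. a i \<noteq> 0} \<noteq> {}"
    proof
      assume "{i. a i \<noteq> 0} = {}"
      then have "m = 0" unfolding m_def fsum_def by simp
      then show False using hn hnm n0 by auto
    qed
    define s where "s = Min {i. a i \<noteq> 0}"
    have as: "a s \<noteq> 0" unfolding s_def using Min_in[OF fa] \<open>{i. a i \<noteq> 0} \<noteq> {}\<close> by auto
    have alow: "\<forall>i<s. a i = 0" unfolding s_def using Min_le[OF fa] by force
    have A0: "fsum a (\<lambda>i. i \<le> s - 1) = 0" using alow by (intro fsum_zero) auto
    have Sa: "s \<le> Sat a \<alpha>" if "1 \<le> \<alpha>" "\<alpha> \<le> m" for \<alpha>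
      using Sat_le[OF fa an that(1), of "s - 1"] that A0 unfolding m_def by auto
    have bz: "\<forall>i\<le>s. b i = 0"
    proof (rule allI, rule impI, rule ccontr)
      fix i assume i: "i \<le> s" "b i \<noteq> 0"
      then have bi: "b i \<ge> 1" using bn[of i] by auto
      have "fsum b (\<lambda>j. j \<le> i) \<ge> b i" using fsum_split[OF fb, of i] nonneg_b[of "\<lambda>j. j < i"] hn hnm by auto
      moreover have "fsum b (\<lambda>j. j \<le> i) \<le> n" unfolding n_def by (rule fsum_mono[OF fb bn]) auto
      ultimately have n1: "1 \<le> n" using bi by auto
      have "Sat b 1 \<le> i" using Sat_le[OF fb bn, of 1 i] n1 \<open>fsum b (\<lambda>j. j \<le> i) \<ge> b i\<close> bi
        unfolding n_def by auto
      moreover have "Sat a 1 < Sat b 1" using LS[of 1 1] n1 hn hnm by auto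
      moreover have "s \<le> Sat a 1" using Sa[of 1] n1 hn hnm by auto
      ultimately show False using i by auto
    qed
    have main: "\<forall>l>s. fsum b (\<lambda>i. i \<le> l) < fsum a (\<lambda>i. i < l)"
    proof (rule allI, rule impI, rule ccontr)
      fix l assume l: "s < l" and c: "\<not> fsum b (\<lambda>i. i \<le> l) < fsum a (\<lambda>i. i < l)"
      define \<beta> where "\<beta> = fsum a (\<lambda>i. i \<le> l - 1)"
      have "fsum a (\<lambda>i. i \<le> s) \<le> \<beta>" unfolding \<beta>_def by (rule fsum_mono[OF fa an]) (use l in auto)
      moreover have "fsum a (\<lambda>i. i < s) = 0" using fsum_lt[of a s] A0 by (rule trans)
      then have "fsum a (\<lambda>i. i \<le> s) = a s" using fsum_split[OF fa, of s] by simp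
      ultimately have b1: "1 \<le> \<beta>" using as an[of s] by auto
      have "fsum a (\<lambda>i. i < l) = \<beta>" unfolding \<beta>_def by (rule fsum_lt)
      then have bB: "\<beta> \<le> fsum b (\<lambda>i. i \<le> l)" using c by linarith
      have "fsum b (\<lambda>i. i \<le> l) \<le> n" unfolding n_def by (rule fsum_mono[OF fb bn]) auto
      then have bn': "\<beta> \<le> n" using bB by auto
      have "Sat b \<beta> \<le> l" using Sat_le[OF fb bn b1] bn' bB unfolding n_def by auto
      moreover have "\<not> Sat a (\<beta> + 1) \<le> l - 1"
        using Sat_le[OF fa an, of "\<beta> + 1" "l - 1"] b1 bn' hn hnm unfolding m_def \<beta>_def by auto
      moreover have "Sat a (\<beta> + 1) < Sat b \<beta>" using LS[of "\<beta> + 1" \<beta>] b1 bn' hn hnm by auto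
      ultimately show False by auto
    qed
    show "\<exists>\<sigma>. a \<sigma> \<noteq> 0 \<and> (\<forall>i<\<sigma>. a i = 0) \<and>
         (\<forall>i. 0 \<le> a i \<and> 0 \<le> b i) \<and>
         (\<forall>i\<le>\<sigma>. b i = 0) \<and>
         (\<forall>l>\<sigma>. fsum b (\<lambda>i. i \<le> l) < fsum a (\<lambda>i. i < l))"
      using as alow hn hnm bz main by blast
  qed
  show ?thesis using E12 E23 by blast
qed

end
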